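(* Let $p$ be a polynomial in one real variable (with real coefficients) all of whose roots are negative real numbers and whose leading coefficient is positive. Then $p(n)>0$ for all $n\in\mathbb Z_+$ and $\{1/p(n)\}_{n=0}^\infty$ is a Hausdorff moment sequence.
   Context: A sequence $\{a_n\}_{n\ge0}$ of reals is a Hausdorff moment sequence if there is a positive Borel measure $\mu$ on $[0,1]$ with $a_n=\int_{[0,1]}x^n\,d\mu(x)$ for all $n\in\mathbb Z_+$. *)

theory Defs
  imports "HOL-Analysis.Analysis" "HOL-Computational_Algebra.Polynomial"
begin

definition hausdorff_moment_seq :: "(nat \<Rightarrow> real) \<Rightarrow> bool" where
  "hausdorff_moment_seq a \<longleftrightarrow>
     (\<exists>M :: real measure. sets M = sets (restrict_space borel {0..1}) \<and>
        (\<forall>n. integrable M (\<lambda>x. x ^ n) \<and> a n = (\<integral>x. x ^ n \<partial>M)))"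

end

theory Submission
  imports Defs "HOL-Probability.Giry_Monad" "HOL-Computational_Algebra.Fundamental_Theorem_Algebra"
begin
definition NM :: "real measure \<Rightarrow> (nat \<Rightarrow> real) \<Rightarrow> bool" where
  "NM M a \<longleftrightarrow> sets M = sets (restrict_space borel {0..1}) \<and> (\<forall>n. a n \<ge> 0 \<and>
     (\<integral>\<^sup>+x. ennreal (x ^ n) \<partial>M) = ennreal (a n))"

lemma NM_space: "sets M = sets (restrict_space borel {0..1::real}) \<Longrightarrow> space M = {0..1}"
proof -
  assume "sets M = sets (restrict_space borel {0..1::real})"
  then have "space M = space (restrict_space borel {0..1::real})" by (rule sets_eq_imp_space_eq)
  then show ?thesis by simp
qed

lemma NM_meas:
  assumes "sets M = sets (restrict_space borel {0..1::real})"
  shows "(f :: real \<Rightarrow> 'b::topological_space) \<in> borel_measurable borel \<Longrightarrow> f \<in> borel_measurable M"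
  using measurable_cong_sets[OF assms refl] measurable_restrict_space1 by blast

lemma NM_hausdorff:
  assumes "NM M a" shows "hausdorff_moment_seq a"
  unfolding hausdorff_moment_seq_def
proof (intro exI[of _ M] conjI allI)
  have s: "sets M = sets (restrict_space borel {0..1::real})" using assms NM_def by auto
  have sp: "space M = {0..1}" using NM_space[OF s] .
  fix n
  have m: "(\<lambda>x. x ^ n) \<in> borel_measurable M" by (rule NM_meas[OF s]) auto
  have ae: "AE x in M. 0 \<le> x ^ n" using sp by (intro AE_I2) auto
  have e: "(\<integral>\<^sup>+x. ennreal (x ^ n) \<partial>M) = ennreal (a n)" "a n \<ge> 0" using assms NM_def by auto
  show "integrable M (\<lambda>x. x ^ n)"
    by (rule integrableI_nonneg[OF m ae]) (simp add: e)
  show "a n = (\<integral>x. x ^ n \<partial>M)"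
    by (subst integral_eq_nn_integral[OF m ae]) (simp add: e)
  show "sets M = sets (restrict_space borel {0..1})" using s .
qed

lemma NM_const:
  assumes "c \<ge> 0"
  shows "NM (density (return (restrict_space borel {0..1}) 1) (\<lambda>_. ennreal c)) (\<lambda>_. c)"
  unfolding NM_def
proof (intro conjI allI)
  fix n
  show "(\<integral>\<^sup>+x. ennreal (x ^ n) \<partial>density (return (restrict_space borel {0..1}) 1) (\<lambda>_. ennreal c)) = ennreal c"
    by (subst nn_integral_density) (auto simp: nn_integral_return measurable_restrict_space1)
qed (use assms in auto)

lemma NM_mult:
  assumes "NM M a" "NM N b"
  shows "NM (distr (M \<Otimes>\<^sub>M N) (restrict_space borel {0..1}) (\<lambda>(x,y). x * y)) (\<lambda>n. a n * b n)"
proof -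
  have sM: "sets M = sets (restrict_space borel {0..1::real})" and sN: "sets N = sets (restrict_space borel {0..1::real})"
    using assms NM_def by auto
  have spM: "space M = {0..1}" and spN: "space N = {0..1}" using NM_space sM sN by auto
  have eM: "\<And>n. (\<integral>\<^sup>+x. ennreal (x ^ n) \<partial>M) = ennreal (a n)" "\<And>n. a n \<ge> 0" using assms NM_def by auto
  have eN: "\<And>n. (\<integral>\<^sup>+x. ennreal (x ^ n) \<partial>N) = ennreal (b n)" "\<And>n. b n \<ge> 0" using assms NM_def by auto
  have "emeasure N (space N) = ennreal (b 0)" using eN(1)[of 0] by simp
  then have "emeasure N (space N) \<noteq> \<infinity>" by simp
  then interpret N: finite_measure N by (rule finite_measureI)
  have idM: "(\<lambda>x. x) \<in> borel_measurable M" by (rule NM_meas[OF sM]) auto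
  have idN: "(\<lambda>x. x) \<in> borel_measurable N" by (rule NM_meas[OF sN]) auto
  have T0: "(\<lambda>(x,y). x * y) \<in> borel_measurable (M \<Otimes>\<^sub>M N)"
    using idM idN by measurable
  have T: "(\<lambda>(x,y). x * y) \<in> measurable (M \<Otimes>\<^sub>M N) (restrict_space borel {0..1})"
    by (rule measurable_restrict_space2[OF _ T0]) (auto simp: space_pair_measure spM spN intro: mult_le_one)
  show ?thesis unfolding NM_def
  proof (intro conjI allI)
    fix n
    have mn: "(\<lambda>x. ennreal (x ^ n)) \<in> borel_measurable (restrict_space borel {0..1})"
      by (intro measurable_restrict_space1) auto
    have "(\<integral>\<^sup>+x. ennreal (x ^ n) \<partial>distr (M \<Otimes>\<^sub>M N) (restrict_space borel {0..1}) (\<lambda>(x,y). x * y))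
        = (\<integral>\<^sup>+z. ennreal ((case z of (x,y) \<Rightarrow> x * y) ^ n) \<partial>(M \<Otimes>\<^sub>M N))"
      by (rule nn_integral_distr[OF T]) (simp add: mn)
    also have "\<dots> = (\<integral>\<^sup>+x. \<integral>\<^sup>+y. ennreal ((x * y) ^ n) \<partial>N \<partial>M)"
      by (subst N.nn_integral_fst[symmetric]) (auto intro!: measurable_compose[OF T0])
    also have "\<dots> = (\<integral>\<^sup>+x. ennreal (x ^ n) * ennreal (b n) \<partial>M)"
    proof (rule nn_integral_cong)
      fix x assume x: "x \<in> space M"
      have "(\<integral>\<^sup>+y. ennreal ((x * y) ^ n) \<partial>N) = (\<integral>\<^sup>+y. ennreal (x ^ n) * ennreal (y ^ n) \<partial>N)"
        using x by (intro nn_integral_cong) (auto simp: spM spN power_mult_distrib ennreal_mult)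
      also have "\<dots> = ennreal (x ^ n) * ennreal (b n)"
        by (subst nn_integral_cmult) (auto simp: eN intro: NM_meas[OF sN])
      finally show "(\<integral>\<^sup>+y. ennreal ((x * y) ^ n) \<partial>N) = ennreal (x ^ n) * ennreal (b n)" .
    qed
    also have "\<dots> = ennreal (a n) * ennreal (b n)"
      by (subst nn_integral_multc) (auto simp: eM intro: NM_meas[OF sM])
    also have "\<dots> = ennreal (a n * b n)" using eM eN by (simp add: ennreal_mult)
    finally show "(\<integral>\<^sup>+x. ennreal (x ^ n) \<partial>distr (M \<Otimes>\<^sub>M N) (restrict_space borel {0..1}) (\<lambda>(x,y). x * y)) = ennreal (a n * b n)" .
    show "a n * b n \<ge> 0" using eM eN by simp
  qed simp
qed


lemma NM_inv_shift:
  assumes b: "b > 0"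
  shows "NM (density (restrict_space lborel {0..1}) (\<lambda>x. ennreal (x powr (b - 1)))) (\<lambda>n. 1 / (real n + b))"
  unfolding NM_def
proof (intro conjI allI)
  show "sets (density (restrict_space lborel {0..1}) (\<lambda>x. ennreal (x powr (b - 1)))) = sets (restrict_space borel {0..1::real})"
  proof -
    have "sets (restrict_space lborel {0..1::real}) = sets (restrict_space borel {0..1})"
      by (rule sets_restrict_space_cong) simp
    then show ?thesis by simp
  qed
  fix n
  have "(\<integral>\<^sup>+x. ennreal (x ^ n) \<partial>density (restrict_space lborel {0..1}) (\<lambda>x. ennreal (x powr (b - 1))))
      = (\<integral>\<^sup>+x. ennreal (x powr (b - 1)) * ennreal (x ^ n) \<partial>restrict_space lborel {0..1})"
    by (subst nn_integral_density) (auto intro!: measurable_restrict_space1)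
  also have "\<dots> = (\<integral>\<^sup>+x. ennreal (x powr (real n + b - 1)) \<partial>restrict_space lborel {0..1})"
  proof (rule nn_integral_cong)
    fix x :: real assume "x \<in> space (restrict_space lborel {0..1})"
    then have x: "0 \<le> x" by simp
    show "ennreal (x powr (b - 1)) * ennreal (x ^ n) = ennreal (x powr (real n + b - 1))"
    proof (cases "x = 0")
      case False
      then have xp: "x > 0" using x by simp
      have "x powr (b - 1) * x ^ n = x powr (b - 1) * x powr real n"
        using xp by (simp add: powr_realpow)
      also have "\<dots> = x powr (b - 1 + real n)" by (rule powr_add[symmetric])
      also have "b - 1 + real n = real n + b - 1" by simp
      finally have "x powr (b - 1) * x ^ n = x powr (real n + b - 1)" .
      then show ?thesis using x by (simp add: ennreal_mult[symmetric])
    qed simp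
  qed
  also have "\<dots> = (\<integral>\<^sup>+x. ennreal (x powr (real n + b - 1)) * indicator {0..1} x \<partial>lborel)"
    by (subst nn_integral_restrict_space) auto
  also have "\<dots> = ennreal (1 powr (real n + b - 1 + 1) / (real n + b - 1 + 1))"
  proof (rule nn_integral_has_integral_lebesgue')
    show "((\<lambda>x. x powr (real n + b - 1)) has_integral (1 powr (real n + b - 1 + 1) / (real n + b - 1 + 1))) {0..1}"
      by (rule has_integral_powr_from_0) (use b in auto)
  qed simp
  also have "\<dots> = ennreal (1 / (real n + b))" by simp
  finally show "(\<integral>\<^sup>+x. ennreal (x ^ n) \<partial>density (restrict_space lborel {0..1}) (\<lambda>x. ennreal (x powr (b - 1)))) = ennreal (1 / (real n + b))" .
  show "0 \<le> 1 / (real n + b)" using b by simp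
qed

lemma NM_prod:
  fixes k :: nat and b :: "nat \<Rightarrow> real"
  assumes "c \<ge> 0" "\<forall>i<k. b i > 0"
  shows "\<exists>M. NM M (\<lambda>n. c * (\<Prod>i<k. 1 / (real n + b i)))"
  using assms(2)
proof (induction k)
  case 0
  show ?case using NM_const[OF assms(1)] by auto
next
  case (Suc k)
  then obtain M where M: "NM M (\<lambda>n. c * (\<Prod>i<k. 1 / (real n + b i)))" by auto
  have "b k > 0" using Suc by auto
  from NM_mult[OF M NM_inv_shift[OF this]] show ?case
    by (auto simp: mult.assoc)
qed

lemma real_factor:
  fixes p :: "real poly"
  assumes "\<forall>z::complex. poly (map_poly complex_of_real p) z = 0 \<longrightarrow> z \<in> \<real> \<and> Re z < 0"
  shows "\<exists>b. (\<forall>i<degree p. b i > 0) \<and> (\<forall>x. poly p x = lead_coeff p * (\<Prod>i<degree p. x + b i))"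
proof -
  define q where "q = map_poly complex_of_real p"
  obtain root where r: "smult (lead_coeff q) (\<Prod>i<degree q. [:-root i, 1:]) = q"
    by (rule complex_poly_decompose')
  have pr: "poly q y = lead_coeff q * (\<Prod>i<degree q. y - root i)" for y
    using arg_cong[OF r, of "\<lambda>f. poly f y"] by (simp add: poly_prod)
  have dq: "degree q = degree p" and lq: "lead_coeff q = of_real (lead_coeff p)"
    by (simp_all add: q_def degree_map_poly coeff_map_poly)
  have pq: "poly q (of_real x) = of_real (poly p x)" for x
    unfolding q_def by (induction p) (auto simp: map_poly_pCons)
  have roots: "root i \<in> \<real> \<and> Re (root i) < 0" if "i < degree p" for i
  proof -
    have "poly q (root i) = 0"
    proof -
      have "(\<Prod>j<degree q. root i - root j) = 0" using that dq by (intro prod_zero) auto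
      then show ?thesis by (simp add: pr)
    qed
    then show ?thesis using assms by (simp add: q_def)
  qed
  define b where "b i = - Re (root i)" for i
  show ?thesis
  proof (intro exI[of _ b] conjI allI impI)
    fix i assume "i < degree p" then show "b i > 0" using roots by (simp add: b_def)
  next
    fix x
    have "complex_of_real (poly p x) = poly q (of_real x)" by (simp add: pq)
    also have "\<dots> = of_real (lead_coeff p) * (\<Prod>i<degree p. of_real x - root i)"
      using lq dq by (simp add: pr)
    also have "\<dots> = of_real (lead_coeff p * (\<Prod>i<degree p. x + b i))"
    proof -
      have "(\<Prod>i<degree p. of_real x - root i) = (\<Prod>i<degree p. complex_of_real (x + b i))"
      proof (rule prod.cong)
        fix i assume "i \<in> {..<degree p}"
        then have "root i = of_real (Re (root i))" using roots by (simp add: Reals_cases complex_eqI)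
        then show "of_real x - root i = complex_of_real (x + b i)" unfolding b_def
          by (metis diff_conv_add_uminus of_real_add of_real_minus)
      qed simp
      then show ?thesis by simp
    qed
    finally show "poly p x = lead_coeff p * (\<Prod>i<degree p. x + b i)" using of_real_eq_iff by blast
  qed
qed

theorem proposition3p2:
  fixes p :: "real poly"
  assumes "lead_coeff p > 0"
    and "\<forall>z::complex. poly (map_poly complex_of_real p) z = 0 \<longrightarrow> z \<in> \<real> \<and> Re z < 0"
  shows "(\<forall>n::nat. poly p (real n) > 0) \<and> hausdorff_moment_seq (\<lambda>n. 1 / poly p (real n))"
proof -
  obtain b where b: "\<And>i. i < degree p \<Longrightarrow> b i > 0"
    and pe: "\<And>x. poly p x = lead_coeff p * (\<Prod>i<degree p. x + b i)"
    using real_factor[OF assms(2)] by blast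
  have pos: "\<And>n::nat. poly p (real n) > 0"
    unfolding pe using assms(1) b by (intro mult_pos_pos prod_pos) (auto intro: add_nonneg_pos)
  obtain M where M: "NM M (\<lambda>n. (1 / lead_coeff p) * (\<Prod>i<degree p. 1 / (real n + b i)))"
    using NM_prod[of "1 / lead_coeff p" "degree p" b] assms(1) b by auto
  have "(\<lambda>n. (1 / lead_coeff p) * (\<Prod>i<degree p. 1 / (real n + b i))) = (\<lambda>n. 1 / poly p (real n))"
    by (simp add: pe prod_dividef)
  with M have "NM M (\<lambda>n. 1 / poly p (real n))" by simp
  then show ?thesis using pos NM_hausdorff by blast
qed

end
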